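(* Let $D$ be a positive integer that is not a perfect square, let $(t_1,u_1)$ be the least strictly positive integer solution of $X^2-DY^2=1$, $\epsilon=t_1+u_1\sqrt D$, and $\epsilon^k=t_k+u_k\sqrt D$ for $k\in\mathbb{Z}$. For a positive integer $m$ let $P(m)$ be the least positive integer $P$ with $t_{k+P}\equiv t_k$ and $u_{k+P}\equiv u_k\pmod m$ for all $k$. Then for every positive integer $m$, $$P(m)\le 2m(\log m+1).$$
   Context: Logarithms: $\log x=\log_2|x|$ if $|x|\ge4$, and $\log x=2$ if $|x|<4$. *)

theory Defs
  imports Complex_Main "HOL-Number_Theory.Cong"
begin

text \<open>Paper's logarithm: log x = log_2 |x| if |x| >= 4, and 2 otherwise.\<close>
definition plog :: "real \<Rightarrow> real" where
  "plog x = (if \<bar>x\<bar> \<ge> 4 then log 2 \<bar>x\<bar> else 2)"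

text \<open>Multiplication in Z[sqrt D]: (a + b sqrt D)(c + d sqrt D).\<close>
definition qmult :: "int \<Rightarrow> int \<times> int \<Rightarrow> int \<times> int \<Rightarrow> int \<times> int" where
  "qmult D x y = (fst x * fst y + D * snd x * snd y, fst x * snd y + snd x * fst y)"

fun qpow_nat :: "int \<Rightarrow> int \<times> int \<Rightarrow> nat \<Rightarrow> int \<times> int" where
  "qpow_nat D x 0 = (1, 0)"
| "qpow_nat D x (Suc n) = qmult D x (qpow_nat D x n)"

text \<open>(t_k, u_k) with eps^k = t_k + u_k sqrt D for k in Z, where eps = t1 + u1 sqrt D.
  Since t1^2 - D u1^2 = 1, eps^(-1) = t1 - u1 sqrt D.\<close>
definition pell_tu :: "int \<Rightarrow> int \<Rightarrow> int \<Rightarrow> int \<Rightarrow> int \<times> int" where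
  "pell_tu D t1 u1 k =
     (if k \<ge> 0 then qpow_nat D (t1, u1) (nat k) else qpow_nat D (t1, - u1) (nat (- k)))"

definition pell_period :: "int \<Rightarrow> int \<Rightarrow> int \<Rightarrow> int \<Rightarrow> nat" where
  "pell_period D t1 u1 m =
     (LEAST P::nat. P > 0 \<and> (\<forall>k::int.
        [fst (pell_tu D t1 u1 (k + int P)) = fst (pell_tu D t1 u1 k)] (mod m) \<and>
        [snd (pell_tu D t1 u1 (k + int P)) = snd (pell_tu D t1 u1 k)] (mod m)))"

end

theory Submission imports Defs "HOL-Number_Theory.Number_Theory" begin

lemma fermat_int:
  assumes p: "prime (p::nat)"
  shows "[(a::int) ^ p = a] (mod int p)"
proof (cases "int p dvd a")
  case True
  have "int p dvd a ^ p" using True p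
    by (metis dvd_trans dvd_power prime_gt_0_nat neq0_conv)
  then show ?thesis using True by (simp add: cong_iff_dvd_diff)
next
  case False
  define a' where "a' = nat (a mod int p)"
  have pp: "int p > 0" using p prime_gt_0_nat by auto
  have a'eq: "int a' = a mod int p" unfolding a'_def using pp by simp
  have c1: "[a = int a'] (mod int p)" using a'eq by (simp add: cong_def)
  have "\<not> p dvd a'"
  proof
    assume "p dvd a'"
    then have "int p dvd int a'" by simp
    then have "int p dvd a" using c1 by (metis cong_dvd_iff)
    then show False using False by simp
  qed
  then have "[a' ^ (p - 1) = 1] (mod p)" using fermat_theorem p by blast
  then have "[a' ^ (p - 1) * a' = 1 * a'] (mod p)" by (rule cong_mult) simp
  then have "[a' ^ p = a'] (mod p)" using p prime_gt_0_nat
    by (metis mult.commute mult_1 power_eq_if neq0_conv)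
  then have "[int a' ^ p = int a'] (mod int p)" by (metis cong_int_iff of_nat_power)
  moreover have "[a ^ p = int a' ^ p] (mod int p)" using c1 by (rule cong_pow)
  ultimately show ?thesis using c1 by (meson cong_sym cong_trans)
qed

lemma sq_ratio:
  fixes D a b :: int
  assumes "D * b^2 = a^2" "b \<noteq> 0"
  shows "\<exists>r. D = r^2"
proof -
  have g: "gcd a b \<noteq> 0" using assms by simp
  obtain a' b' where ab: "a = a' * gcd a b" "b = b' * gcd a b" "coprime a' b'"
    using gcd_coprime_exists[OF g] by blast
  have "D * b'^2 * (gcd a b)^2 = a'^2 * (gcd a b)^2"
    using assms(1) ab by (metis power_mult_distrib mult.assoc)
  moreover have "(gcd a b)^2 \<noteq> 0" using g by simp
  ultimately have e: "D * b'^2 = a'^2" using mult_right_cancel by blast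
  have "a'^2 = b' * (D * b')" using e by (simp add: power2_eq_square algebra_simps)
  then have d: "b' dvd a'^2" by (rule dvdI)
  have c: "coprime b' (a'^2)" using ab(3) by (simp add: coprime_commute)
  have "is_unit b'" by (rule coprime_common_divisor[OF c dvd_refl d])
  then have "\<bar>b'\<bar> = 1" by (simp add: zdvd1_eq)
  moreover have "b'^2 = \<bar>b'\<bar>^2" by simp
  ultimately have "b'^2 = 1" by simp
  then show ?thesis using e by auto
qed

locale pell =
  fixes D t1 u1 :: int
  assumes Dpos: "D > 0" and nsq: "\<not> (\<exists>r::int. D = r ^ 2)"
    and nrm: "t1 ^ 2 - D * u1 ^ 2 = 1"
begin

definition w :: real where "w = sqrt (real_of_int D)"

lemma ww: "w * w = of_int D"
  unfolding w_def using Dpos by simp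

lemma uniq: assumes "of_int a + of_int b * w = 0" shows "a = 0 \<and> b = 0"
proof (cases "b = 0")
  case True then show ?thesis using assms by simp
next
  case False
  have "of_int b * w = - of_int a" using assms by linarith
  then have "(of_int b * w) * (of_int b * w) = of_int a * of_int a" by simp
  then have "of_int b * of_int b * (w * w) = (of_int a * of_int a :: real)" by (simp add: algebra_simps)
  then have "of_int (D * b^2) = (of_int (a^2) :: real)" by (simp add: ww power2_eq_square algebra_simps)
  then have "D * b^2 = a^2" by (simp only: of_int_eq_iff)
  then show ?thesis using sq_ratio False nsq by blast
qed

lemma uniq2: assumes "of_int a + of_int b * w = of_int c + of_int d * w" shows "a = c \<and> b = d"
  using uniq[of "a - c" "b - d"] assms by (simp add: algebra_simps)

definition Zs :: "real set" where "Zs = {x. \<exists>a b::int. x = of_int a + of_int b * w}"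

lemma Zs_int[simp]: "of_int a \<in> Zs" unfolding Zs_def by (rule CollectI, rule exI[of _ a], rule exI[of _ 0]) simp
lemma Zs_nat[simp]: "of_nat a \<in> Zs" using Zs_int[of "int a"] by simp
lemma Zs_numeral[simp]: "numeral n \<in> Zs" using Zs_int[of "numeral n"] by simp
lemma Zs_0[simp]: "0 \<in> Zs" using Zs_int[of 0] by simp
lemma Zs_1[simp]: "1 \<in> Zs" using Zs_int[of 1] by simp
lemma Zs_w[simp]: "w \<in> Zs" unfolding Zs_def by (rule CollectI, rule exI[of _ 0], rule exI[of _ 1]) simp
lemma ZsE: assumes "x \<in> Zs" obtains a b where "x = of_int a + of_int b * w"
  using assms unfolding Zs_def by blast
lemma ZsI: "x = of_int a + of_int b * w \<Longrightarrow> x \<in> Zs"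
  unfolding Zs_def by blast
lemma Zs_add[simp]: assumes "x \<in> Zs" "y \<in> Zs" shows "x + y \<in> Zs"
proof -
  obtain a b c d where "x = of_int a + of_int b * w" "y = of_int c + of_int d * w"
    using assms ZsE by meson
  then have "x + y = of_int (a+c) + of_int (b+d) * w" by (simp add: algebra_simps)
  then show ?thesis by (rule ZsI)
qed
lemma Zs_uminus[simp]: assumes "x \<in> Zs" shows "- x \<in> Zs"
proof -
  obtain a b where "x = of_int a + of_int b * w"
    using assms ZsE by meson
  then have "- x = of_int (-a) + of_int (-b) * w" by (simp add: algebra_simps)
  then show ?thesis by (rule ZsI)
qed
lemma Zs_diff[simp]: "x \<in> Zs \<Longrightarrow> y \<in> Zs \<Longrightarrow> x - y \<in> Zs"
  using Zs_add[of x "-y"] by simp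
lemma Zs_mult[simp]: assumes "x \<in> Zs" "y \<in> Zs" shows "x * y \<in> Zs"
proof -
  obtain a b c d where "x = of_int a + of_int b * w" "y = of_int c + of_int d * w"
    using assms ZsE by meson
  then have "x * y = of_int (a*c + b*d*D) + of_int (a*d+b*c) * w"
    by (simp add: algebra_simps ww[symmetric])
  then show ?thesis by (rule ZsI)
qed
lemma Zs_pow[simp]: "x \<in> Zs \<Longrightarrow> x ^ n \<in> Zs"
  by (induction n) auto

definition dv :: "int \<Rightarrow> real \<Rightarrow> bool" where "dv n x \<longleftrightarrow> (\<exists>z\<in>Zs. x = of_int n * z)"

lemma dv_add: assumes "dv n x" "dv n y" shows "dv n (x + y)"
proof -
  obtain a b where "a \<in> Zs" "b \<in> Zs" "x = of_int n * a" "y = of_int n * b" using assms unfolding dv_def by blast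
  then have "x + y = of_int n * (a + b)" "a + b \<in> Zs" by (simp_all add: distrib_left)
  then show ?thesis unfolding dv_def by blast
qed
lemma dv_diff: assumes "dv n x" "dv n y" shows "dv n (x - y)"
proof -
  obtain a b where "a \<in> Zs" "b \<in> Zs" "x = of_int n * a" "y = of_int n * b" using assms unfolding dv_def by blast
  then have "x - y = of_int n * (a - b)" "a - b \<in> Zs" by (simp_all add: right_diff_distrib)
  then show ?thesis unfolding dv_def by blast
qed
lemma dv_multR: assumes "dv n x" "y \<in> Zs" shows "dv n (x * y)"
proof -
  obtain a where "a \<in> Zs" "x = of_int n * a" using assms unfolding dv_def by blast
  then have "x * y = of_int n * (a * y)" "a * y \<in> Zs" using assms(2) by simp_all
  then show ?thesis unfolding dv_def by blast
qed
lemma dv_multL: "dv n x \<Longrightarrow> y \<in> Zs \<Longrightarrow> dv n (y * x)"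
  using dv_multR by (simp add: mult.commute)
lemma dv_0[simp]: "dv n 0" unfolding dv_def by (rule bexI[of _ 0]) auto
lemma dv_int: assumes "n dvd a" shows "dv n (of_int a)"
proof -
  obtain c where "a = n * c" using assms by blast
  then have "of_int a = of_int n * (of_int c :: real)" by simp
  then show ?thesis unfolding dv_def using Zs_int by blast
qed
lemma dv_self: "x \<in> Zs \<Longrightarrow> dv n (of_int n * x)" unfolding dv_def by blast
lemma dv_Zs: "x \<in> Zs \<Longrightarrow> dv n x \<Longrightarrow> True" by simp
lemma dv_one: "dv 1 x \<longleftrightarrow> x \<in> Zs" unfolding dv_def by simp
lemma dv_dvd: assumes "dv n x" "k dvd n" shows "dv k x"
proof -
  obtain c where c: "n = k * c" using assms(2) by blast
  obtain z where z: "z \<in> Zs" "x = of_int n * z" using assms(1) unfolding dv_def by blast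
  have "x = of_int k * (of_int c * z)" using z c by simp
  moreover have "of_int c * z \<in> Zs" using z by simp
  ultimately show ?thesis unfolding dv_def by blast
qed
lemma dv_sum: "finite A \<Longrightarrow> (\<And>i. i \<in> A \<Longrightarrow> dv n (f i)) \<Longrightarrow> dv n (sum f A)"
  by (induction A rule: finite_induct) (auto intro: dv_add)

lemma dv_coeff: assumes "dv n (of_int a + of_int b * w)" shows "n dvd a \<and> n dvd b"
proof -
  obtain c d where "of_int a + of_int b * w = of_int n * (of_int c + of_int d * w)"
    using assms unfolding dv_def Zs_def by blast
  then have "of_int a + of_int b * w = of_int (n*c) + of_int (n*d) * w" by (simp add: algebra_simps)
  from uniq2[OF this] show ?thesis by simp
qed

lemma dv_coprime: assumes "coprime n1 n2" "dv n1 x" "dv n2 x" shows "dv (n1 * n2) x"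
proof -
  obtain a b where x: "x = of_int n1 * (of_int a + of_int b * w)"
    using assms(2) unfolding dv_def Zs_def by blast
  then have "x = of_int (n1*a) + of_int (n1*b) * w" by (simp add: algebra_simps)
  then have "dv n2 (of_int (n1*a) + of_int (n1*b) * w)" using assms(3) by simp
  then have "n2 dvd n1 * a" "n2 dvd n1 * b" using dv_coeff by blast+
  moreover have "coprime n2 n1" using assms(1) by (rule coprime_commute[THEN iffD1])
  ultimately have "n2 dvd a" "n2 dvd b" using coprime_dvd_mult_right_iff by blast+
  then obtain a' b' where "a = n2 * a'" "b = n2 * b'" by (meson dvdE)
  then have "x = of_int (n1 * n2) * (of_int a' + of_int b' * w)" using x by (simp add: algebra_simps)
  then show ?thesis unfolding dv_def Zs_def by blast
qed


definition e :: real where "e = of_int t1 + of_int u1 * w"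
definition e' :: real where "e' = of_int t1 - of_int u1 * w"

lemma nrm_real: "(of_int t1 :: real)^2 = 1 + of_int D * (of_int u1)^2"
proof -
  have "t1^2 = 1 + D * u1^2" using nrm by simp
  then have "(of_int (t1^2) :: real) = of_int (1 + D * u1^2)" by simp
  then show ?thesis by simp
qed

lemma ee': "e * e' = 1"
proof -
  have "e * e' = (of_int t1)^2 - (of_int u1)^2 * (w*w)"
    unfolding e_def e'_def by (simp add: algebra_simps power2_eq_square)
  also have "\<dots> = 1" using nrm_real ww by simp
  finally show ?thesis .
qed
lemma e'e: "e' * e = 1" using ee' by (simp add: mult.commute)
lemma Zs_e[simp]: "e \<in> Zs" unfolding e_def by (rule ZsI) simp
lemma Zs_e'[simp]: "e' \<in> Zs" unfolding e'_def by (rule ZsI[of _ t1 "-u1"]) simp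

lemma expand: "y \<in> Zs \<Longrightarrow> \<exists>z\<in>Zs. (1+y)^s = 1 + of_nat s * y + y*y*z"
proof (induction s)
  case 0 then show ?case by (intro bexI[of _ 0]) auto
next
  case (Suc s)
  then obtain z where z: "z \<in> Zs" "(1+y)^s = 1 + of_nat s * y + y*y*z" by blast
  have "(1+y)^Suc s = 1 + of_nat (Suc s) * y + y*y*(of_nat s + z + y*z)"
    using z(2) by (simp add: algebra_simps)
  moreover have "of_nat s + z + y*z \<in> Zs" using z(1) Suc.prems by simp
  ultimately show ?case by blast
qed

lemma lift: assumes "x \<in> Zs" "dv n (of_nat s * (x - 1))" "dv n ((x-1)*(x-1))"
  shows "dv n (x^s - 1)"
proof -
  obtain z where z: "z \<in> Zs" "(1+(x-1))^s = 1 + of_nat s * (x-1) + (x-1)*(x-1)*z"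
    using expand[of "x-1" s] assms(1) by auto
  then have eq: "x^s - 1 = of_nat s * (x - 1) + (x-1)*(x-1)*z" by simp
  have "dv n ((x-1)*(x-1)*z)" by (rule dv_multR[OF assms(3) z(1)])
  then have "dv n (of_nat s * (x - 1) + (x-1)*(x-1)*z)" by (rule dv_add[OF assms(2)])
  then show ?thesis unfolding eq .
qed

lemma lift_p: assumes "prime (p::nat)" "j \<ge> 1" "x \<in> Zs" "dv (int p ^ j) (x - 1)"
  shows "dv (int p ^ (j+1)) (x^p - 1)"
proof (rule lift[OF assms(3)])
  obtain z where z: "z \<in> Zs" "x - 1 = of_int (int p ^ j) * z" using assms(4) unfolding dv_def by blast
  have "of_nat p * (x - 1) = of_int (int p ^ (j+1)) * z" using z(2) by simp
  show "dv (int p ^ (j + 1)) (of_nat p * (x - 1))" unfolding \<open>of_nat p * (x - 1) = _\<close> by (rule dv_self[OF z(1)])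
  have jj: "j + j = (j+1) + (j - 1)" using assms(2) by simp
  have "(x-1)*(x-1) = of_int (int p ^ (j+j)) * (z*z)" using z(2) by (simp add: power_add algebra_simps)
  also have "\<dots> = of_int (int p ^ (j+1)) * (of_int (int p ^ (j-1)) * z*z)" unfolding jj power_add by simp
  moreover have "of_int (int p ^ (j-1)) * z*z \<in> Zs" using z(1) by simp
  ultimately show "dv (int p ^ (j + 1)) ((x - 1) * (x - 1))" using dv_self by (simp only:)
qed

lemma lift_k: assumes "prime (p::nat)" "x \<in> Zs" "dv (int p) (x - 1)"
  shows "dv (int p ^ (k+1)) (x^(p^k) - 1)"
proof (induction k)
  case 0 then show ?case using assms by simp
next
  case (Suc k)
  have "dv (int p ^ (k+1+1)) ((x^(p^k))^p - 1)"
    by (rule lift_p[OF assms(1) _ _ Suc]) (use assms in auto)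
  then show ?case by (simp add: power_mult[symmetric] mult.commute)
qed

lemma pow_cong1: assumes "x \<in> Zs" "dv n (x - 1)" shows "dv n (x^c - 1)"
proof (induction c)
  case 0 then show ?case by simp
next
  case (Suc c)
  have eq: "x^Suc c - 1 = x^c * (x - 1) + (x^c - 1)" by (simp add: algebra_simps)
  have "dv n (x^c * (x - 1))" by (rule dv_multL[OF assms(2)]) (simp add: assms(1))
  then show ?case unfolding eq using Suc by (rule dv_add)
qed

lemma frob: assumes p: "prime (p::nat)" and AB: "A \<in> Zs" "B \<in> Zs"
  shows "dv (int p) ((A + B)^p - A^p - B^p)"
proof -
  define f where "f k = of_nat (p choose k) * A^k * B^(p-k)" for k
  have s: "(A+B)^p = sum f {..p}" unfolding f_def by (rule binomial_ring)
  have p0: "p \<noteq> 0" using p by auto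
  have "sum f {..p} = f p + sum f ({..p} - {p})" by (rule sum.remove) auto
  also have "sum f ({..p} - {p}) = f 0 + sum f ({..p} - {p} - {0})" by (rule sum.remove) (use p0 in auto)
  finally have "(A+B)^p - A^p - B^p = sum f ({..p} - {p} - {0})"
    using s by (simp add: f_def)
  moreover have "dv (int p) (sum f ({..p} - {p} - {0}))"
  proof (rule dv_sum)
    fix k assume k: "k \<in> {..p} - {p} - {0}"
    then have "p dvd (p choose k)" using dvd_choose_prime p by auto
    then obtain c where c: "p choose k = p * c" by blast
    have fk: "f k = of_int (int p) * (of_nat c * A^k * B^(p-k))" unfolding f_def c by simp
    have "of_nat c * A^k * B^(p-k) \<in> Zs" using AB by simp
    then show "dv (int p) (f k)" unfolding fk by (rule dv_self)
  qed simp
  ultimately show ?thesis by simp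
qed


lemma e2: "e^2 - 1 = of_int 2 * (of_int (D * u1^2) + of_int (t1 * u1) * w)"
proof -
  have "e^2 = (of_int t1)^2 + 2 * of_int t1 * of_int u1 * w + (of_int u1)^2 * (w*w)"
    unfolding e_def by (simp add: power2_eq_square algebra_simps)
  also have "\<dots> = 1 + of_int D * (of_int u1)^2 + 2 * of_int t1 * of_int u1 * w + (of_int u1)^2 * of_int D"
    using nrm_real ww by simp
  finally show ?thesis by (simp add: algebra_simps)
qed

lemma base2: "dv 2 (e^2 - 1)"
  unfolding e2 by (rule dv_self) (rule ZsI, rule refl)

lemma baseD: assumes "prime (p::nat)" "int p dvd D" shows "dv (int p) (e^(2*p) - 1)"
proof -
  obtain d where d: "D = int p * d" using assms(2) by blast
  define y where "y = e^2 - 1"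
  have yZ: "y \<in> Zs" unfolding y_def by simp
  have x: "e^2 \<in> Zs" by simp
  have "dv (int p) ((e^2)^p - 1)"
  proof (rule lift[OF x])
    show "dv (int p) (of_nat p * (e^2 - 1))" using dv_self[OF yZ, of "int p"] unfolding y_def by simp
    have "y * y = of_int 4 * of_int (u1^2) * ((of_int D * of_int u1)^2 + 2 * of_int D * of_int u1 * of_int t1 * w + (of_int t1)^2 * (w * w))"
      unfolding y_def e2 by (simp add: power2_eq_square algebra_simps)
    also have "\<dots> = of_int D * (of_int 4 * of_int (u1^2) * (of_int D * (of_int u1)^2 + 2 * of_int u1 * of_int t1 * w + (of_int t1)^2))"
      unfolding ww by (simp add: power2_eq_square algebra_simps)
    also have "\<dots> = of_int (int p) * (of_int d * (of_int 4 * of_int (u1^2) * (of_int D * (of_int u1)^2 + 2 * of_int u1 * of_int t1 * w + (of_int t1)^2)))"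
      unfolding d by simp
    finally have yy: "y * y = \<dots>" .
    have "of_int d * (of_int 4 * of_int (u1^2) * (of_int D * (of_int u1)^2 + 2 * of_int u1 * of_int t1 * w + (of_int t1)^2)) \<in> Zs"
      by simp
    then have "dv (int p) (y*y)" unfolding yy by (rule dv_self)
    then show "dv (int p) ((e^2 - 1) * (e^2 - 1))" unfolding y_def .
  qed
  then show ?thesis by (simp add: power_mult)
qed

lemma int_to_dv: "[a = b] (mod n) \<Longrightarrow> dv n (of_int a - of_int b)"
  using dv_int[of n "a - b"] by (simp add: cong_iff_dvd_diff)

lemma baseOdd: assumes p: "prime (p::nat)" "odd p" "\<not> int p dvd D"
  shows "\<exists>Q. 0 < Q \<and> even Q \<and> Q \<le> 2*p \<and> dv (int p) (e^Q - 1)"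
proof -
  define h where "h = (p - 1) div 2"
  have p2: "p \<ge> 2" using p prime_ge_2_nat by blast
  have ph: "p = 2*h + 1" using p(2) p2 unfolding h_def by presburger
  have f1: "[D^p = D] (mod int p)" by (rule fermat_int[OF p(1)])
  have pD: "coprime (int p) D" using p(1) p(3) prime_imp_coprime[of "int p" D] by simp
  have "[D^(2*h) * D = 1 * D] (mod int p)" using f1 ph by (simp add: power_add mult.commute)
  moreover have pD': "coprime D (int p)" using pD by (simp add: coprime_commute)
  ultimately have f2: "[D^(2*h) = 1] (mod int p)"
    using cong_mult_rcancel[OF pD'] by blast
  then have "int p dvd (D^h - 1) * (D^h + 1)"
    by (simp add: cong_iff_dvd_diff power_mult algebra_simps power2_eq_square)
  moreover have pi: "prime (int p)" using p(1) by simp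
  ultimately have "int p dvd D^h - 1 \<or> int p dvd D^h + 1"
    using prime_dvd_mult_iff by blast
  then obtain s where s: "s = 1 \<or> s = -1" "[D^h = s] (mod int p)"
  proof
    assume "int p dvd D^h - 1"
    then have "[D^h = 1] (mod int p)" by (simp add: cong_iff_dvd_diff)
    then show ?thesis using that by blast
  next
    assume "int p dvd D^h + 1"
    then have "[D^h = -1] (mod int p)" by (simp add: cong_iff_dvd_diff)
    then show ?thesis using that by blast
  qed
  have wp: "w^p = of_int (D^h) * w"
    unfolding ph by (simp add: power_add power_mult ww[symmetric] power2_eq_square)
  have fr: "dv (int p) (e^p - (of_int t1)^p - (of_int u1 * w)^p)"
    unfolding e_def by (rule frob[OF p(1)]) simp_all
  have ct: "dv (int p) (of_int (t1^p) - of_int t1)" by (rule int_to_dv[OF fermat_int[OF p(1)]])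
  have cu0: "[u1^p * D^h = u1 * s] (mod int p)"
    by (rule cong_mult[OF fermat_int[OF p(1)] s(2)])
  have cu: "dv (int p) ((of_int (u1^p * D^h) - of_int (u1 * s)) * w)"
    by (rule dv_multR[OF int_to_dv[OF cu0]]) simp
  have eq: "e^p - (of_int t1 + of_int s * of_int u1 * w) =
     (e^p - (of_int t1)^p - (of_int u1 * w)^p) + (of_int (t1^p) - of_int t1) + (of_int (u1^p * D^h) - of_int (u1 * s)) * w"
    by (simp add: power_mult_distrib wp algebra_simps)
  have key: "dv (int p) (e^p - (of_int t1 + of_int s * of_int u1 * w))"
    unfolding eq by (intro dv_add fr ct cu)
  show ?thesis
  proof (cases "s = 1")
    case True
    then have k: "dv (int p) (e^p - e)" using key unfolding e_def by simp
    have "e^(p-1) - 1 = e' * (e^p - e)"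
    proof -
      obtain q where q: "p = Suc q" using p2 by (cases p) auto
      have ep: "e^p = e * e^(p-1)" unfolding q by simp
      have "e' * (e^p - e) = (e' * e) * e^(p-1) - e' * e"
        unfolding ep by (simp add: algebra_simps)
      then show ?thesis using e'e by simp
    qed
    then have "dv (int p) (e^(p-1) - 1)" using dv_multL[OF k Zs_e'] by simp
    moreover have "even (p - 1)" by (subst ph) simp
    moreover have "0 < p - 1" "p - 1 \<le> 2 * p" using p2 by simp_all
    ultimately show ?thesis by (intro exI[of _ "p-1"]) simp
  next
    case False
    then have "s = -1" using s by simp
    then have k: "dv (int p) (e^p - e')" using key unfolding e'_def by simp
    have "e * (e^p - e') = e^(p+1) - e * e'" by (simp add: algebra_simps)
    then have "e^(p+1) - 1 = e * (e^p - e')" unfolding ee' by simp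
    then have "dv (int p) (e^(p+1) - 1)" using dv_multL[OF k Zs_e] by simp
    moreover have "even (p + 1)" by (subst ph) simp
    moreover have "p + 1 \<le> 2 * p" using p2 by simp
    ultimately show ?thesis by (intro exI[of _ "p+1"]) simp
  qed
qed


lemma base: assumes p: "prime (p::nat)"
  shows "\<exists>Q. 0 < Q \<and> even Q \<and> Q \<le> 2*p \<and> dv (int p) (e^Q - 1)"
proof (cases "p = 2")
  case True
  then show ?thesis using base2 by (intro exI[of _ 2]) simp
next
  case False
  then have odd: "odd p" using p prime_odd_nat[of p] prime_ge_2_nat[of p] by simp
  show ?thesis
  proof (cases "int p dvd D")
    case True
    then show ?thesis using baseD[OF p True] p by (intro exI[of _ "2*p"]) (simp add: prime_gt_0_nat)
  next
    case False
    then show ?thesis using baseOdd[OF p odd] by blast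
  qed
qed

lemma primepow: assumes p: "prime (p::nat)" and k: "k \<ge> 1"
  shows "\<exists>P. 0 < P \<and> even P \<and> P \<le> 2*p^k \<and> dv (int (p^k)) (e^P - 1)"
proof -
  obtain Q where Q: "0 < Q" "even Q" "Q \<le> 2*p" "dv (int p) (e^Q - 1)" using base[OF p] by blast
  have "dv (int p ^ ((k-1)+1)) ((e^Q)^(p^(k-1)) - 1)"
    by (rule lift_k[OF p _ Q(4)]) simp
  moreover have "(k-1)+1 = k" using k by simp
  ultimately have d: "dv (int (p^k)) (e^(Q * p^(k-1)) - 1)" by (simp add: power_mult)
  have pp: "p > 0" using p prime_gt_0_nat by blast
  have "Q * p^(k-1) \<le> 2*p * p^(k-1)" using Q(3) by simp
  also have "2*p * p^(k-1) = 2 * p^k" using k by (cases k) simp_all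
  finally have le: "Q * p^(k-1) \<le> 2 * p^k" .
  have "0 < Q * p^(k-1)" using Q(1) pp by simp
  moreover have "even (Q * p^(k-1))" using Q(2) by simp
  ultimately show ?thesis using le d by blast
qed

lemma exists_period: "n \<ge> 1 \<Longrightarrow> \<exists>P. 0 < P \<and> even P \<and> P \<le> 2*n \<and> dv (int n) (e^P - 1)"
proof (induction n rule: less_induct)
  case (less n)
  show ?case
  proof (cases "n = 1")
    case True
    have "dv 1 (e^2 - 1)" unfolding dv_one by simp
    then show ?thesis using True by (intro exI[of _ 2]) simp
  next
    case False
    then obtain p where p: "prime p" "p dvd n" using prime_factor_nat by blast
    have n0: "n \<noteq> 0" using less.prems by simp
    have nu: "\<not> is_unit p" using p(1) not_prime_unit by blast
    define k where "k = multiplicity p n"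
    define r where "r = n div p^k"
    have nr: "n = p^k * r" unfolding r_def k_def by (simp add: multiplicity_dvd)
    have pr: "\<not> p dvd r" unfolding r_def k_def by (rule multiplicity_decompose[OF n0 nu])
    have "k > 0" unfolding k_def by (rule multiplicity_gt_zero_iff[THEN iffD2, OF n0 nu p(2)])
    then have k1: "k \<ge> 1" by simp
    have r0: "r \<noteq> 0"
    proof
      assume "r = 0"
      then have "n = 0" using nr by simp
      then show False using n0 by simp
    qed
    obtain P1 where P1: "0 < P1" "even P1" "P1 \<le> 2*p^k" "dv (int (p^k)) (e^P1 - 1)"
      using primepow[OF p(1) k1] by blast
    show ?thesis
    proof (cases "r = 1")
      case True
      then have "n = p^k" using nr by simp
      then show ?thesis using P1 by blast
    next
      case False
      have p2: "p \<ge> 2" using prime_ge_2_nat p(1) by blast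
      have "p \<le> p^k" using p2 k1 by (intro self_le_power) simp_all
      then have pk: "2 \<le> p^k" using p2 by linarith
      have "2*r \<le> p^k*r" using pk by (rule mult_le_mono1)
      then have rlt: "r < n" using nr r0 by linarith
      obtain P2 where P2: "0 < P2" "even P2" "P2 \<le> 2*r" "dv (int r) (e^P2 - 1)"
        using less.IH[OF rlt] r0 by (auto simp: Suc_le_eq)
      define P where "P = lcm P1 P2"
      obtain c1 where c1: "P = P1 * c1" unfolding P_def by (meson dvd_lcm1 dvdE)
      obtain c2 where c2: "P = P2 * c2" unfolding P_def by (meson dvd_lcm2 dvdE)
      have d1: "dv (int (p^k)) (e^P - 1)" unfolding c1 power_mult by (rule pow_cong1[OF Zs_pow[OF Zs_e] P1(4)])
      have d2: "dv (int r) (e^P - 1)" unfolding c2 power_mult by (rule pow_cong1[OF Zs_pow[OF Zs_e] P2(4)])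
      have "coprime p r" by (rule prime_imp_coprime[OF p(1) pr])
      then have cop: "coprime (p^k) r" by simp
      then have copi: "coprime (int (p^k)) (int r)" by (simp only: coprime_int_iff)
      have d0: "dv (int (p^k) * int r) (e^P - 1)" by (rule dv_coprime[OF copi d1 d2])
      have "int (p^k) * int r = int n" unfolding nr by simp
      then have d: "dv (int n) (e^P - 1)" using d0 by simp
      have "2 dvd gcd P1 P2" using P1(2) P2(2) by (rule gcd_greatest)
      moreover have "gcd P1 P2 > 0" using P1(1) by simp
      ultimately have g2: "2 \<le> gcd P1 P2" by (rule dvd_imp_le)
      have "gcd P1 P2 * P = P1 * P2" unfolding P_def using prod_gcd_lcm_nat[of P1 P2] by simp
      moreover have "2 * P \<le> gcd P1 P2 * P" using g2 by (rule mult_le_mono1)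
      ultimately have "2 * P \<le> P1 * P2" by linarith
      also have "\<dots> \<le> (2*p^k) * (2*r)" using P1(3) P2(3) by (rule mult_le_mono)
      also have "\<dots> = 2 * (2 * n)" unfolding nr by simp
      finally have le: "P \<le> 2*n" by simp
      have "0 < P" unfolding P_def using P1(1) P2(1) by (rule lcm_pos_nat)
      moreover have "even P" unfolding c1 using P1(2) by simp
      ultimately show ?thesis using le d by blast
    qed
  qed
qed


lemma qpow: "of_int (fst (qpow_nat D (x,y) n)) + of_int (snd (qpow_nat D (x,y) n)) * w = (of_int x + of_int y * w)^n"
proof (induction n)
  case 0 then show ?case by simp
next
  case (Suc n)
  obtain a b where ab: "qpow_nat D (x,y) n = (a,b)" by (cases "qpow_nat D (x,y) n") auto
  have IH: "of_int a + of_int b * w = (of_int x + of_int y * w)^n" using Suc ab by simp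
  have "(of_int x + of_int y * w) * (of_int a + of_int b * w) =
     of_int x * of_int a + of_int y * of_int b * (w*w) + (of_int x * of_int b + of_int y * of_int a) * w"
    by (simp add: algebra_simps)
  also have "\<dots> = of_int (x * a + D * y * b) + of_int (x * b + y * a) * w"
    unfolding ww by (simp add: algebra_simps)
  finally have eq: "(of_int x + of_int y * w) * (of_int a + of_int b * w) = of_int (x * a + D * y * b) + of_int (x * b + y * a) * w" .
  have "qpow_nat D (x,y) (Suc n) = (x * a + D * y * b, x * b + y * a)"
    using ab by (simp add: qmult_def)
  then show ?case using eq IH by simp
qed

lemma inv_e: "inverse e = e'" by (rule inverse_unique[OF ee'])
lemma e_nz: "e \<noteq> 0" using ee' by auto

lemma tu: "of_int (fst (pell_tu D t1 u1 k)) + of_int (snd (pell_tu D t1 u1 k)) * w = e powi k"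
proof (cases "k \<ge> 0")
  case True
  then have "pell_tu D t1 u1 k = qpow_nat D (t1,u1) (nat k)" unfolding pell_tu_def by simp
  moreover have "e powi k = e ^ nat k" using True by (simp add: power_int_def)
  ultimately show ?thesis using qpow[of t1 u1 "nat k"] unfolding e_def by simp
next
  case False
  then have "pell_tu D t1 u1 k = qpow_nat D (t1,-u1) (nat (-k))" unfolding pell_tu_def by simp
  moreover have "e powi k = e' ^ nat (-k)" using False by (simp add: power_int_def inv_e)
  moreover have "e' = of_int t1 + of_int (-u1) * w" unfolding e'_def by simp
  ultimately show ?thesis using qpow[of t1 "-u1" "nat (-k)"] by simp
qed

lemma Zs_epowi: "e powi k \<in> Zs"
  using tu[of k] ZsI by metis

lemma period: assumes "dv m (e^P - 1)"
  shows "[fst (pell_tu D t1 u1 (k + int P)) = fst (pell_tu D t1 u1 k)] (mod m) \<and>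
         [snd (pell_tu D t1 u1 (k + int P)) = snd (pell_tu D t1 u1 k)] (mod m)"
proof -
  define a where "a = fst (pell_tu D t1 u1 (k + int P))"
  define b where "b = snd (pell_tu D t1 u1 (k + int P))"
  define c where "c = fst (pell_tu D t1 u1 k)"
  define d where "d = snd (pell_tu D t1 u1 k)"
  have "e powi (k + int P) = e powi k * e powi (int P)" by (rule power_int_add) (simp add: e_nz)
  also have "e powi (int P) = e ^ P" by simp
  finally have ep: "e powi (k + int P) = e powi k * e ^ P" .
  have "of_int (a - c) + of_int (b - d) * w = (of_int a + of_int b * w) - (of_int c + of_int d * w)"
    by (simp add: algebra_simps)
  also have "\<dots> = e powi k * (e^P - 1)" unfolding a_def b_def c_def d_def tu ep by (simp add: algebra_simps)
  finally have eq: "of_int (a - c) + of_int (b - d) * w = e powi k * (e^P - 1)" .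
  have "dv m (e powi k * (e^P - 1))" by (rule dv_multL[OF assms Zs_epowi])
  then have "m dvd a - c \<and> m dvd b - d" using dv_coeff unfolding eq[symmetric] by blast
  then show ?thesis unfolding a_def b_def c_def d_def by (simp add: cong_iff_dvd_diff)
qed

end

lemma plog_nonneg: "plog x \<ge> 0"
proof (cases "\<bar>x\<bar> \<ge> 4")
  case True
  then have "0 \<le> log 2 \<bar>x\<bar>" by simp
  then show ?thesis using True unfolding plog_def by simp
next
  case False then show ?thesis unfolding plog_def by simp
qed

theorem mainTheorem15:
  fixes D t1 u1 m :: int
  assumes "D > 0"
    and "\<not> (\<exists>r::int. D = r ^ 2)"
    and "t1 > 0" and "u1 > 0" and "t1 ^ 2 - D * u1 ^ 2 = 1"
    and "\<forall>t u::int. t > 0 \<and> u > 0 \<and> t ^ 2 - D * u ^ 2 = 1 \<longrightarrow> t1 \<le> t"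
    and "m > 0"
  shows "real (pell_period D t1 u1 m) \<le> 2 * real_of_int m * (plog (real_of_int m) + 1)"
proof -
  interpret pell D t1 u1 by unfold_locales (use assms in auto)
  have m1: "nat m \<ge> 1" using assms(7) by simp
  obtain P where P: "0 < P" "even P" "P \<le> 2 * nat m" "dv (int (nat m)) (e^P - 1)"
    using exists_period[OF m1] by blast
  have dm: "dv m (e^P - 1)" using P(4) assms(7) by simp
  have "P > 0 \<and> (\<forall>k::int.
        [fst (pell_tu D t1 u1 (k + int P)) = fst (pell_tu D t1 u1 k)] (mod m) \<and>
        [snd (pell_tu D t1 u1 (k + int P)) = snd (pell_tu D t1 u1 k)] (mod m))"
    using P(1) period[OF dm] by blast
  then have le: "pell_period D t1 u1 m \<le> P" unfolding pell_period_def by (rule Least_le)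
  have "real (pell_period D t1 u1 m) \<le> real P" using le by simp
  also have "\<dots> \<le> 2 * real_of_int m" using P(3) assms(7) by linarith
  also have "\<dots> = 2 * real_of_int m * 1" by simp
  also have "\<dots> \<le> 2 * real_of_int m * (plog (real_of_int m) + 1)"
    by (rule mult_left_mono) (use plog_nonneg[of "real_of_int m"] assms(7) in auto)
  finally show ?thesis .
qed

end
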